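(* There exists a (deterministic) set $D\subseteq[0,90^\circ]$ of full Lebesgue measure such that for every $\alpha\in D$ and every $z\in\mathbb{Z}^2$, with $\mathbb{P}$-probability one there exists at most one $\alpha$-geodesic starting at $z$ (in $R(z)$).
   Context: $\mathcal W=(w(z),z\in\mathbb{Z}^2)$ i.i.d. exponential of mean 1, law $\mathbb{P}$. For $z\le z'$ coordinatewise, $G(z,z')$ is the maximum over up/right nearest-neighbor paths from $z$ to $z'$ of the sum of weights on the path (endpoints included); the a.s. unique maximizing path is the geodesic $\pi(z,z')$. $R(z)=\bigcup_{z'\in z+\mathbb{N}^2}\pi(z,z')$, $\mathbb{N}=\{0,1,\dots\}$. A semi-infinite up/right path $(z_k)_{k\ge1}$ starting at $z_1=z$ is a uni-geodesic if for all $i<j$ the geodesic from $z_i$ to $z_j$ is $(z_i,\dots,z_j)$; it has direction $\alpha$ if $z_k/|z_k|\to e^{i\alpha}=(\cos\alpha,\sin\alpha)$; an $\alpha$-geodesic is a uni-geodesic with direction $\alpha$. *)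

theory Defs
  imports "HOL-Probability.Probability"
begin

type_synonym site = "int \<times> int"
type_synonym env = "site \<Rightarrow> real"

definition env_law :: "env measure" where
  "env_law = PiM UNIV (\<lambda>_::site. density lborel (exponential_density 1))"

definition ur_step :: "site \<Rightarrow> site \<Rightarrow> bool" where
  "ur_step a b \<longleftrightarrow> b = (fst a + 1, snd a) \<or> b = (fst a, snd a + 1)"

definition ur_paths :: "site \<Rightarrow> site \<Rightarrow> site list set" where
  "ur_paths z z' = {xs. xs \<noteq> [] \<and> hd xs = z \<and> last xs = z' \<and>
      (\<forall>i. Suc i < length xs \<longrightarrow> ur_step (xs ! i) (xs ! Suc i))}"

definition path_weight :: "env \<Rightarrow> site list \<Rightarrow> real" where
  "path_weight w xs = sum_list (map w xs)"

definition is_geodesic :: "env \<Rightarrow> site \<Rightarrow> site \<Rightarrow> site list \<Rightarrow> bool" where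
  "is_geodesic w z z' xs \<longleftrightarrow> xs \<in> ur_paths z z' \<and>
      (\<forall>ys \<in> ur_paths z z'. ys \<noteq> xs \<longrightarrow> path_weight w ys < path_weight w xs)"

definition uni_geodesic :: "env \<Rightarrow> site \<Rightarrow> (nat \<Rightarrow> site) \<Rightarrow> bool" where
  "uni_geodesic w z p \<longleftrightarrow> p 0 = z \<and> (\<forall>k. ur_step (p k) (p (Suc k))) \<and>
      (\<forall>i j. i < j \<longrightarrow> is_geodesic w (p i) (p j) (map p [i..<Suc j]))"

definition to_R2 :: "site \<Rightarrow> real \<times> real" where
  "to_R2 z = (real_of_int (fst z), real_of_int (snd z))"

definition has_direction :: "(nat \<Rightarrow> site) \<Rightarrow> real \<Rightarrow> bool" where
  "has_direction p \<alpha> \<longleftrightarrow>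
     ((\<lambda>k. (1 / norm (to_R2 (p k))) *\<^sub>R to_R2 (p k)) \<longlongrightarrow> (cos \<alpha>, sin \<alpha>)) sequentially"

definition alpha_geodesic :: "env \<Rightarrow> real \<Rightarrow> site \<Rightarrow> (nat \<Rightarrow> site) \<Rightarrow> bool" where
  "alpha_geodesic w \<alpha> z p \<longleftrightarrow> uni_geodesic w z p \<and> has_direction p \<alpha>"

end

theory Submission
  imports Defs
begin

lemma env_prob: "prob_space env_law"
proof -
  interpret product_prob_space "\<lambda>_::site. density lborel (exponential_density 1)" UNIV
    by (simp add: product_prob_space_def product_sigma_finite_def prob_space_exponential_density
        prob_space_imp_sigma_finite product_prob_space_axioms_def)
  show ?thesis unfolding env_law_def by (rule P.prob_space_axioms)
qed

lemma space_env: "space env_law = UNIV"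
  unfolding env_law_def by (simp add: space_PiM)

lemma meas_coord: "(\<lambda>w. w s) \<in> borel_measurable env_law"
proof -
  have "(\<lambda>w. w s) \<in> measurable env_law (density lborel (exponential_density 1))"
    unfolding env_law_def by (rule measurable_component_singleton) simp
  then show ?thesis by (simp cong: measurable_cong_sets)
qed

lemma meas_pw: "(\<lambda>w. path_weight w ys) \<in> borel_measurable env_law"
  unfolding path_weight_def
  by (induction ys) (auto intro!: borel_measurable_add meas_coord)

lemma meas_geo: "Measurable.pred env_law (\<lambda>w. is_geodesic w a b xs)"
  unfolding is_geodesic_def using meas_pw by measurable

lemma countable_pos:
  assumes "finite_measure M" "\<And>i. i \<in> I \<Longrightarrow> F i \<in> sets M" "disjoint_family_on F I"
  shows "countable {i\<in>I. measure M (F i) > 0}"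
proof -
  interpret finite_measure M by fact
  let ?M = "measure M (space M)" and ?m = "\<lambda>i. measure M (F i)"
  show ?thesis
  proof cases
    assume "?M = 0"
    have "\<not> ?m i > 0" if "i \<in> I" for i
      using assms(2)[OF that] bounded_measure[of "F i"] \<open>?M = 0\<close> by simp
    then have eq: "{i\<in>I. ?m i > 0} = {}" by auto
    show ?thesis unfolding eq by (rule countable_empty)
  next
    assume "?M \<noteq> 0"
    then have *: "{i\<in>I. ?m i > 0} = (\<Union>n. {i\<in>I. ?M / Suc n < ?m i})"
    proof (intro antisym subsetI)
      fix i assume i: "i \<in> {i\<in>I. ?m i > 0}"
      have M0: "?M > 0" using \<open>?M \<noteq> 0\<close> measure_nonneg[of M "space M"] by linarith
      obtain n where n: "inverse (real (Suc n)) < ?m i / ?M"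
        using reals_Archimedean[of "?m i / ?M"] i M0 by auto
      have "?M / Suc n < ?m i" using n M0 by (simp add: field_simps)
      then show "i \<in> (\<Union>n. {i\<in>I. ?M / Suc n < ?m i})" using i by auto
    next
      fix i assume "i \<in> (\<Union>n. {i\<in>I. ?M / Suc n < ?m i})"
      then obtain n where "i \<in> I" "?M / Suc n < ?m i" by auto
      moreover have "?M / Suc n \<ge> 0" using measure_nonneg[of M "space M"] by simp
      ultimately have "?m i > 0" by linarith
      with \<open>i \<in> I\<close> show "i \<in> {i\<in>I. ?m i > 0}" by blast
    qed
    have **: "\<And>n. finite {i\<in>I. ?M / Suc n < ?m i}"
    proof (rule ccontr)
      fix n assume "infinite {i\<in>I. ?M / Suc n < ?m i}" (is "infinite ?X")
      then obtain X where "finite X" "card X = Suc (Suc n)" "X \<subseteq> ?X"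
        using infinite_arbitrarily_large[of ?X "Suc (Suc n)"] by blast
      then have *: "\<And>x. x \<in> X \<Longrightarrow> ?M / Suc n \<le> ?m x"
        by (auto intro: less_imp_le)
      have XI: "X \<subseteq> I" using \<open>X \<subseteq> ?X\<close> by auto
      have M0: "?M > 0" using \<open>?M \<noteq> 0\<close> measure_nonneg[of M "space M"] by linarith
      have "(\<Sum>x\<in>X. ?M / Suc n) = real (Suc (Suc n)) * (?M / Suc n)"
        using \<open>card X = Suc (Suc n)\<close> by simp
      also have "\<dots> > ?M" using M0 by (simp add: field_simps)
      finally have "?M < (\<Sum>x\<in>X. ?M / Suc n)" .
      also have "\<dots> \<le> (\<Sum>x\<in>X. ?m x)"
        by (rule sum_mono) fact
      also have "\<dots> = measure M (\<Union>x\<in>X. F x)"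
      proof (rule finite_measure_finite_Union[symmetric])
        show "finite X" by fact
        show "F ` X \<subseteq> sets M" using assms(2) XI by blast
        show "disjoint_family_on F X" by (rule disjoint_family_on_mono[OF XI assms(3)])
      qed
      finally have "?M < measure M (\<Union>x\<in>X. F x)" .
      moreover have "measure M (\<Union>x\<in>X. F x) \<le> ?M"
      proof (rule finite_measure_mono)
        show "(\<Union>x\<in>X. F x) \<subseteq> space M" using XI assms(2) sets.sets_into_space by blast
      qed simp
      ultimately show False by linarith
    qed
    show ?thesis
      unfolding * by (intro countable_UN countableI_type countable_finite[OF **])
  qed
qed

definition lvl :: "site \<Rightarrow> int" where "lvl a = fst a + snd a"

definition pg :: "env \<Rightarrow> site \<Rightarrow> site list \<Rightarrow> bool" where
  "pg w z xs \<longleftrightarrow> xs \<noteq> [] \<and> hd xs = z \<and> (\<forall>i. Suc i < length xs \<longrightarrow> ur_step (xs!i) (xs!Suc i)) \<and>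
     (\<forall>j. 0 < j \<and> j < length xs \<longrightarrow> is_geodesic w z (xs!j) (take (Suc j) xs))"

definition upv :: "site \<Rightarrow> site" where "upv v = (fst v, snd v + 1)"
definition rtv :: "site \<Rightarrow> site" where "rtv v = (fst v + 1, snd v)"

lemma pg_ne: "pg w z xs \<Longrightarrow> xs \<noteq> []" unfolding pg_def by blast
lemma pg_hd: "pg w z xs \<Longrightarrow> hd xs = z" unfolding pg_def by blast
lemma pg_step: "pg w z xs \<Longrightarrow> Suc i < length xs \<Longrightarrow> ur_step (xs!i) (xs!Suc i)" unfolding pg_def by blast
lemma pg_geo: "pg w z xs \<Longrightarrow> 0 < j \<Longrightarrow> j < length xs \<Longrightarrow> is_geodesic w z (xs!j) (take (Suc j) xs)"
  unfolding pg_def by blast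

lemma pg_lvl: "pg w z xs \<Longrightarrow> i < length xs \<Longrightarrow> lvl (xs!i) = lvl z + int i"
proof (induction i)
  case 0
  then have "xs \<noteq> []" "hd xs = z" unfolding pg_def by blast+
  then have "xs!0 = z" by (simp add: hd_conv_nth)
  then show ?case by simp
next
  case (Suc i)
  have st: "\<forall>i. Suc i < length xs \<longrightarrow> ur_step (xs!i) (xs!Suc i)" using Suc.prems(1) unfolding pg_def by blast
  then have "ur_step (xs!i) (xs!Suc i)" using Suc.prems(2) by blast
  moreover have "lvl (xs!i) = lvl z + int i" using Suc by simp
  ultimately show ?case by (auto simp: ur_step_def lvl_def)
qed

lemma geo_unique: "is_geodesic w a b xs \<Longrightarrow> is_geodesic w a b ys \<Longrightarrow> xs = ys"
proof (rule ccontr)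
  assume g: "is_geodesic w a b xs" "is_geodesic w a b ys" and ne: "xs \<noteq> ys"
  have y: "ys \<in> ur_paths a b" and x: "xs \<in> ur_paths a b"
    and hx: "\<forall>zs\<in>ur_paths a b. zs \<noteq> xs \<longrightarrow> path_weight w zs < path_weight w xs"
    and hy: "\<forall>zs\<in>ur_paths a b. zs \<noteq> ys \<longrightarrow> path_weight w zs < path_weight w ys"
    using g unfolding is_geodesic_def by auto
  have "path_weight w ys < path_weight w xs" using hx y ne by auto
  moreover have "path_weight w xs < path_weight w ys" using hy x ne by auto
  ultimately show False by simp
qed

lemma order_lemma:
  assumes px: "pg w z xs" and py: "pg w z ys" and len: "length xs = length ys"
    and m: "Suc m < length xs" and xm: "xs!m = v" and ym: "ys!m = v"
    and xu: "xs!Suc m = upv v" and yr: "ys!Suc m = rtv v"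
  shows "Suc m + k < length xs \<Longrightarrow> fst (xs!(Suc m + k)) < fst (ys!(Suc m + k))"
proof (induction k)
  case 0 then show ?case using xu yr by (simp add: upv_def rtv_def)
next
  case (Suc k)
  let ?k = "Suc m + k"
  have IH: "fst (xs!?k) < fst (ys!?k)" using Suc by simp
  have sx: "ur_step (xs!?k) (xs!Suc ?k)" using pg_step[OF px] Suc.prems by simp
  have sy: "ur_step (ys!?k) (ys!Suc ?k)" using pg_step[OF py] Suc.prems len by simp
  have lx: "lvl (xs!Suc ?k) = lvl z + int (Suc ?k)" using pg_lvl[OF px] Suc.prems by simp
  have ly: "lvl (ys!Suc ?k) = lvl z + int (Suc ?k)" using pg_lvl[OF py] Suc.prems len by simp
  have le: "fst (xs!Suc ?k) \<le> fst (ys!Suc ?k)" using sx sy IH by (auto simp: ur_step_def)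
  show ?case
  proof (rule ccontr)
    assume "\<not> ?thesis"
    then have "fst (xs!Suc ?k) = fst (ys!Suc ?k)" using le by simp
    with lx ly have eq: "xs!Suc ?k = ys!Suc ?k" by (simp add: lvl_def prod_eq_iff)
    have g1: "is_geodesic w z (xs!Suc ?k) (take (Suc (Suc ?k)) xs)"
      using pg_geo[OF px, of "Suc ?k"] Suc.prems by simp
    have g2: "is_geodesic w z (xs!Suc ?k) (take (Suc (Suc ?k)) ys)"
      using pg_geo[OF py, of "Suc ?k"] Suc.prems len eq by simp
    have "take (Suc (Suc ?k)) xs = take (Suc (Suc ?k)) ys" using geo_unique[OF g1 g2] .
    then have "take (Suc (Suc ?k)) xs ! Suc m = take (Suc (Suc ?k)) ys ! Suc m" by simp
    then have "xs ! Suc m = ys ! Suc m" by simp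
    then show False using xu yr by (simp add: upv_def rtv_def prod_eq_iff)
  qed
qed

definition Br :: "env \<Rightarrow> site \<Rightarrow> site \<Rightarrow> site \<Rightarrow> site set" where
  "Br w z v d = {a. \<exists>xs m. pg w z xs \<and> last xs = a \<and> Suc m < length xs \<and> xs!m = v \<and> xs!Suc m = d}"

lemma Br_order:
  assumes a: "a \<in> Br w z v (upv v)" and b: "b \<in> Br w z v (rtv v)" and l: "lvl a = lvl b"
  shows "fst a < fst b"
proof -
  obtain xs m where px: "pg w z xs" "last xs = a" "Suc m < length xs" "xs!m = v" "xs!Suc m = upv v"
    using a by (auto simp: Br_def)
  obtain ys m' where py: "pg w z ys" "last ys = b" "Suc m' < length ys" "ys!m' = v" "ys!Suc m' = rtv v"
    using b by (auto simp: Br_def)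
  have "lvl v = lvl z + int m" using pg_lvl[OF px(1), of m] px by simp
  moreover have "lvl v = lvl z + int m'" using pg_lvl[OF py(1), of m'] py by simp
  ultimately have mm: "m' = m" by simp
  have "xs \<noteq> []" "ys \<noteq> []" using pg_ne px(1) py(1) by auto
  then have la: "lvl a = lvl z + int (length xs - 1)" and lb: "lvl b = lvl z + int (length ys - 1)"
    using pg_lvl[OF px(1), of "length xs - 1"] pg_lvl[OF py(1), of "length ys - 1"] px(2) py(2)
    by (auto simp: last_conv_nth)
  have len: "length xs = length ys" using la lb l px(3) py(3) by simp
  define k where "k = length xs - 1 - Suc m"
  have kk: "Suc m + k = length xs - 1" "Suc m + k < length xs" using px(3) by (auto simp: k_def)
  have "fst (xs!(Suc m + k)) < fst (ys!(Suc m + k))"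
    using order_lemma[OF px(1) py(1) len px(3) px(4) _ px(5), of k] py mm kk by simp
  then show ?thesis using kk px(2) py(2) len \<open>xs \<noteq> []\<close> \<open>ys \<noteq> []\<close> by (simp add: last_conv_nth)
qed

definition dirv :: "site \<Rightarrow> real \<times> real" where
  "dirv a = (1 / norm (to_R2 a)) *\<^sub>R to_R2 a"
definition ev :: "real \<Rightarrow> real \<times> real" where "ev \<alpha> = (cos \<alpha>, sin \<alpha>)"
definition crs :: "real \<times> real \<Rightarrow> real \<times> real \<Rightarrow> real" where
  "crs p q = fst p * snd q - snd p * fst q"

lemma crs_int:
  fixes a b :: site
  assumes "fst a < fst b" "lvl a = lvl b" "lvl a \<ge> 0"
  shows "fst a * snd b - snd a * fst b \<le> 0"
proof -
  define s where "s = lvl a"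
  have e: "snd a = s - fst a" "snd b = s - fst b" using assms by (auto simp: s_def lvl_def)
  have "fst a * snd b - snd a * fst b = fst a * (s - fst b) - (s - fst a) * fst b"
    by (subst e(1), subst e(2)) (rule refl)
  also have "\<dots> = s * (fst a - fst b)" by (simp add: algebra_simps)
  finally have "fst a * snd b - snd a * fst b = s * (fst a - fst b)" .
  also have "\<dots> \<le> 0" using assms by (simp add: s_def mult_nonneg_nonpos)
  finally show ?thesis .
qed

lemma crs_dir:
  assumes "fst a < fst b" "lvl a = lvl b" "lvl a \<ge> 0"
  shows "crs (dirv a) (dirv b) \<le> 0"
proof -
  define c where "c = 1 / norm (to_R2 a)"
  define d where "d = 1 / norm (to_R2 b)"
  have c: "c \<ge> 0" and d: "d \<ge> 0" by (auto simp: c_def d_def)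
  have da: "dirv a = (c * real_of_int (fst a), c * real_of_int (snd a))"
    unfolding dirv_def to_R2_def c_def by simp
  have db: "dirv b = (d * real_of_int (fst b), d * real_of_int (snd b))"
    unfolding dirv_def to_R2_def d_def by simp
  have "crs (dirv a) (dirv b) = c * d * real_of_int (fst a * snd b - snd a * fst b)"
    unfolding da db crs_def by (simp add: algebra_simps)
  also have "\<dots> \<le> 0"
  proof -
    have "real_of_int (fst a * snd b - snd a * fst b) \<le> 0" using crs_int[OF assms] by linarith
    moreover have "c * d \<ge> 0" using c d by simp
    ultimately show ?thesis using mult_nonneg_nonpos by blast
  qed
  finally show ?thesis .
qed

lemma norm_dirv: "norm (dirv a) \<le> 1"
  by (simp add: dirv_def)

lemma comp_bound:
  fixes p :: "real \<times> real"
  assumes "norm p \<le> 1" shows "\<bar>fst p\<bar> \<le> 1" "\<bar>snd p\<bar> \<le> 1"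
proof -
  have "norm (fst p) \<le> norm p" using norm_fst_le[of "fst p" "snd p"] by simp
  then show "\<bar>fst p\<bar> \<le> 1" using assms by simp
  have "norm (snd p) \<le> norm p" using norm_snd_le[of "snd p" "fst p"] by simp
  then show "\<bar>snd p\<bar> \<le> 1" using assms by simp
qed

lemma abs_prod_le:
  fixes x y e :: real
  assumes "\<bar>x\<bar> \<le> e" "\<bar>y\<bar> \<le> 1" shows "\<bar>x * y\<bar> \<le> e"
proof -
  have "\<bar>x * y\<bar> = \<bar>x\<bar> * \<bar>y\<bar>" by (simp add: abs_mult)
  also have "\<dots> \<le> \<bar>x\<bar> * 1" by (rule mult_left_mono) (use assms in auto)
  finally show ?thesis using assms by simp
qed

lemma real_bound:
  fixes p1 p2 q1 q2 c1 c2 d1 d2 e :: real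
  assumes "\<bar>p1 - c1\<bar> \<le> e" "\<bar>p2 - c2\<bar> \<le> e" "\<bar>q1 - d1\<bar> \<le> e" "\<bar>q2 - d2\<bar> \<le> e"
    "\<bar>p1\<bar> \<le> 1" "\<bar>p2\<bar> \<le> 1" "\<bar>d1\<bar> \<le> 1" "\<bar>d2\<bar> \<le> 1"
  shows "c1 * d2 - c2 * d1 \<le> p1 * q2 - p2 * q1 + 4 * e"
proof -
  have "c1 * d2 - c2 * d1 - (p1 * q2 - p2 * q1) = (c1 - p1) * d2 + (d2 - q2) * p1 - (c2 - p2) * d1 - (d1 - q1) * p2"
    by (simp add: algebra_simps)
  moreover have "\<bar>(c1 - p1) * d2\<bar> \<le> e" using assms by (intro abs_prod_le) (auto simp: abs_minus_commute)
  moreover have "\<bar>(d2 - q2) * p1\<bar> \<le> e" using assms by (intro abs_prod_le) (auto simp: abs_minus_commute)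
  moreover have "\<bar>(c2 - p2) * d1\<bar> \<le> e" using assms by (intro abs_prod_le) (auto simp: abs_minus_commute)
  moreover have "\<bar>(d1 - q1) * p2\<bar> \<le> e" using assms by (intro abs_prod_le) (auto simp: abs_minus_commute)
  ultimately show ?thesis by linarith
qed

lemma crs_near:
  assumes "dist p (ev a) \<le> e" "dist q (ev b) \<le> e" "norm p \<le> 1"
  shows "sin (b - a) \<le> crs p q + 4 * e"
proof -
  have "\<bar>fst p - cos a\<bar> \<le> e" using dist_fst_le[of p "ev a"] assms(1) by (simp add: ev_def dist_real_def)
  moreover have "\<bar>snd p - sin a\<bar> \<le> e" using dist_snd_le[of p "ev a"] assms(1) by (simp add: ev_def dist_real_def)
  moreover have "\<bar>fst q - cos b\<bar> \<le> e" using dist_fst_le[of q "ev b"] assms(2) by (simp add: ev_def dist_real_def)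
  moreover have "\<bar>snd q - sin b\<bar> \<le> e" using dist_snd_le[of q "ev b"] assms(2) by (simp add: ev_def dist_real_def)
  moreover note comp_bound[OF assms(3)]
  moreover have "\<bar>cos b\<bar> \<le> 1" "\<bar>sin b\<bar> \<le> 1" by auto
  ultimately have "cos a * sin b - sin a * cos b \<le> crs p q + 4 * e"
    unfolding crs_def by (intro real_bound) auto
  then show ?thesis by (simp add: sin_diff mult.commute)
qed

definition near :: "env \<Rightarrow> site \<Rightarrow> site \<Rightarrow> site \<Rightarrow> real \<Rightarrow> nat \<Rightarrow> int \<Rightarrow> bool" where
  "near w z v d \<alpha> n s \<longleftrightarrow> (\<exists>a\<in>Br w z v d. lvl a = s \<and> dist (dirv a) (ev \<alpha>) < 1 / real (Suc n))"

definition Aev :: "env \<Rightarrow> site \<Rightarrow> site \<Rightarrow> real \<Rightarrow> bool" where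
  "Aev w z v \<alpha> \<longleftrightarrow> (\<forall>n. \<exists>N. \<forall>s\<ge>N. near w z v (upv v) \<alpha> n s \<and> near w z v (rtv v) \<alpha> n s)"

lemma half_disj:
  assumes "Aev w z v a" "Aev w z v b"
  shows "sin (b - a) \<le> 0"
proof (rule ccontr)
  assume "\<not> ?thesis"
  then have pos: "sin (b - a) > 0" by simp
  obtain n where n: "inverse (real (Suc n)) < sin (b - a) / 4"
    using reals_Archimedean[of "sin (b - a) / 4"] pos by auto
  obtain N1 where N1: "\<forall>s\<ge>N1. near w z v (upv v) a n s \<and> near w z v (rtv v) a n s"
    using assms(1) unfolding Aev_def by blast
  obtain N2 where N2: "\<forall>s\<ge>N2. near w z v (upv v) b n s \<and> near w z v (rtv v) b n s"
    using assms(2) unfolding Aev_def by blast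
  define s where "s = max (max N1 N2) 0"
  have "near w z v (upv v) a n s" using N1 by (simp add: s_def)
  then obtain x where x: "x \<in> Br w z v (upv v)" "lvl x = s" "dist (dirv x) (ev a) < 1 / real (Suc n)"
    unfolding near_def by blast
  have "near w z v (rtv v) b n s" using N2 by (simp add: s_def)
  then obtain y where y: "y \<in> Br w z v (rtv v)" "lvl y = s" "dist (dirv y) (ev b) < 1 / real (Suc n)"
    unfolding near_def by blast
  have "fst x < fst y" using Br_order[OF x(1) y(1)] x(2) y(2) by simp
  then have c: "crs (dirv x) (dirv y) \<le> 0" using crs_dir[of x y] x(2) y(2) by (simp add: s_def)
  have "sin (b - a) \<le> crs (dirv x) (dirv y) + 4 * (1 / real (Suc n))"
    using x(3) y(3) norm_dirv by (intro crs_near) auto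
  then have "sin (b - a) \<le> 4 * inverse (real (Suc n))" using c by (simp add: divide_inverse)
  then show False using n by linarith
qed

lemma disj:
  assumes "Aev w z v a" "Aev w z v b" "a \<in> {0..pi/2}" "b \<in> {0..pi/2}"
  shows "a = b"
proof -
  have "sin (b - a) \<le> 0" using half_disj[OF assms(1,2)] .
  moreover have "sin (a - b) \<le> 0" using half_disj[OF assms(2,1)] .
  then have "sin (b - a) \<ge> 0" by (metis minus_diff_eq neg_0_le_iff_le sin_minus)
  ultimately have "sin (b - a) = 0" by simp
  moreover have "0 \<le> a" "a \<le> pi/2" "0 \<le> b" "b \<le> pi/2" using assms(3,4) by auto
  then have "- pi < b - a" "b - a < pi" using pi_gt_zero by linarith+
  ultimately have "b - a = 0" using sin_eq_0_pi by blast
  then show ?thesis by simp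
qed

lemma uni_lvl: "uni_geodesic w z p \<Longrightarrow> lvl (p k) = lvl z + int k"
proof (induction k)
  case 0 then show ?case by (simp add: uni_geodesic_def)
next
  case (Suc k)
  have "ur_step (p k) (p (Suc k))" using Suc.prems unfolding uni_geodesic_def by blast
  with Suc show ?case by (auto simp: ur_step_def lvl_def)
qed

lemma uni_pg:
  assumes u: "uni_geodesic w z p"
  shows "pg w z (map p [0..<Suc k])"
  unfolding pg_def
proof (intro conjI allI impI)
  show "map p [0..<Suc k] \<noteq> []" by simp
  show "hd (map p [0..<Suc k]) = z" using u by (simp add: uni_geodesic_def hd_map del: upt_Suc)
next
  fix i assume "Suc i < length (map p [0..<Suc k])"
  then have "Suc i \<le> k" by simp
  then show "ur_step (map p [0..<Suc k] ! i) (map p [0..<Suc k] ! Suc i)"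
    using u unfolding uni_geodesic_def by (simp del: upt_Suc add: nth_map_upt)
next
  fix j assume j: "0 < j \<and> j < length (map p [0..<Suc k])"
  have t: "take (Suc j) (map p [0..<Suc k]) = map p [0..<Suc j]"
    using j by (simp add: take_map del: upt_Suc)
  have n: "map p [0..<Suc k] ! j = p j" using j by (simp del: upt_Suc add: nth_map_upt)
  have "\<forall>i j. i < j \<longrightarrow> is_geodesic w (p i) (p j) (map p [i..<Suc j])" "p 0 = z"
    using u unfolding uni_geodesic_def by blast+
  then have "is_geodesic w z (p j) (map p [0..<Suc j])" using j by metis
  then show "is_geodesic w z (map p [0..<Suc k] ! j) (take (Suc j) (map p [0..<Suc k]))"
    using t n by simp
qed

lemma uni_Br:
  assumes u: "uni_geodesic w z p" and m: "m < k" and d: "p (Suc m) = dd"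
  shows "p k \<in> Br w z (p m) dd"
  unfolding Br_def
proof (intro CollectI exI conjI)
  show "pg w z (map p [0..<Suc k])" by (rule uni_pg[OF u])
  show "last (map p [0..<Suc k]) = p k" by (simp del: upt_Suc add: last_map)
  show "Suc m < length (map p [0..<Suc k])" using m by simp
  show "map p [0..<Suc k] ! m = p m" using m by (simp del: upt_Suc add: nth_map_upt)
  show "map p [0..<Suc k] ! Suc m = dd" using m d by (simp del: upt_Suc add: nth_map_upt)
qed

lemma dir_ev:
  assumes "has_direction p \<alpha>" "e > 0"
  shows "\<exists>K. \<forall>k\<ge>K. dist (dirv (p k)) (ev \<alpha>) < e"
proof -
  have "((\<lambda>k. dirv (p k)) \<longlongrightarrow> ev \<alpha>) sequentially"
    using assms(1) unfolding has_direction_def dirv_def ev_def by simp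
  from tendstoD[OF this assms(2)] have "eventually (\<lambda>k. dist (dirv (p k)) (ev \<alpha>) < e) sequentially" .
  then show ?thesis by (simp add: eventually_sequentially)
qed

lemma split_Aev:
  assumes p: "alpha_geodesic w \<alpha> z p" and q: "alpha_geodesic w \<alpha> z q"
    and pm: "p m = q m" and pu: "p (Suc m) = upv (p m)" and qr: "q (Suc m) = rtv (p m)"
  shows "Aev w z (p m) \<alpha>"
  unfolding Aev_def
proof
  fix n
  have e: "1 / real (Suc n) > 0" by simp
  obtain K1 where K1: "\<forall>k\<ge>K1. dist (dirv (p k)) (ev \<alpha>) < 1 / real (Suc n)"
    using dir_ev[OF _ e] p unfolding alpha_geodesic_def by blast
  obtain K2 where K2: "\<forall>k\<ge>K2. dist (dirv (q k)) (ev \<alpha>) < 1 / real (Suc n)"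
    using dir_ev[OF _ e] q unfolding alpha_geodesic_def by blast
  have up: "uni_geodesic w z p" "uni_geodesic w z q" using p q unfolding alpha_geodesic_def by auto
  show "\<exists>N. \<forall>s\<ge>N. near w z (p m) (upv (p m)) \<alpha> n s \<and> near w z (p m) (rtv (p m)) \<alpha> n s"
  proof (intro exI allI impI)
    fix s assume s: "lvl z + int (Suc m + K1 + K2) \<le> s"
    define k where "k = nat (s - lvl z)"
    have k: "k \<ge> Suc m + K1 + K2" "lvl z + int k = s" using s by (auto simp: k_def)
    show "near w z (p m) (upv (p m)) \<alpha> n s \<and> near w z (p m) (rtv (p m)) \<alpha> n s"
      unfolding near_def
    proof (rule conjI)
      have "p k \<in> Br w z (p m) (upv (p m))" using uni_Br[OF up(1), of m k] pu k by simp
      moreover have "lvl (p k) = s" using uni_lvl[OF up(1)] k by simp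
      moreover have "dist (dirv (p k)) (ev \<alpha>) < 1 / real (Suc n)" using K1 k by simp
      ultimately show "\<exists>a\<in>Br w z (p m) (upv (p m)). lvl a = s \<and> dist (dirv a) (ev \<alpha>) < 1 / real (Suc n)"
        by blast
    next
      have "q k \<in> Br w z (p m) (rtv (p m))" using uni_Br[OF up(2), of m k] qr pm k by simp
      moreover have "lvl (q k) = s" using uni_lvl[OF up(2)] k by simp
      moreover have "dist (dirv (q k)) (ev \<alpha>) < 1 / real (Suc n)" using K2 k by simp
      ultimately show "\<exists>a\<in>Br w z (p m) (rtv (p m)). lvl a = s \<and> dist (dirv a) (ev \<alpha>) < 1 / real (Suc n)"
        by blast
    qed
  qed
qed

lemma bad_Aev:
  assumes p: "alpha_geodesic w \<alpha> z p" and q: "alpha_geodesic w \<alpha> z q" and ne: "p \<noteq> q"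
  shows "\<exists>v. Aev w z v \<alpha>"
proof -
  have up: "uni_geodesic w z p" "uni_geodesic w z q" using p q unfolding alpha_geodesic_def by auto
  have ex: "\<exists>k. p k \<noteq> q k" using ne by auto
  define d where "d = (LEAST k. p k \<noteq> q k)"
  have dne: "p d \<noteq> q d" unfolding d_def by (rule LeastI_ex[OF ex])
  have before: "\<And>i. i < d \<Longrightarrow> p i = q i" unfolding d_def using not_less_Least by blast
  have "p 0 = q 0" using up unfolding uni_geodesic_def by simp
  have "d \<noteq> 0"
  proof
    assume "d = 0"
    then show False using \<open>p 0 = q 0\<close> dne by simp
  qed
  then obtain m where dm: "d = Suc m" by (cases d) auto
  have pm: "p m = q m" using before dm by simp
  have sp: "ur_step (p m) (p (Suc m))" and sq: "ur_step (q m) (q (Suc m))"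
    using up unfolding uni_geodesic_def by blast+
  have "(p (Suc m) = upv (p m) \<and> q (Suc m) = rtv (p m)) \<or> (q (Suc m) = upv (q m) \<and> p (Suc m) = rtv (q m))"
    using sp sq pm dne dm unfolding ur_step_def upv_def rtv_def by auto
  then show ?thesis
  proof
    assume "p (Suc m) = upv (p m) \<and> q (Suc m) = rtv (p m)"
    then show ?thesis using split_Aev[OF p q pm] by blast
  next
    assume "q (Suc m) = upv (q m) \<and> p (Suc m) = rtv (q m)"
    then show ?thesis using split_Aev[OF q p pm[symmetric]] by blast
  qed
qed

declare meas_geo[measurable]

lemma meas_pg[measurable]: "Measurable.pred env_law (\<lambda>w. pg w z xs)"
  unfolding pg_def by measurable

lemma near_alt: "near w z v d \<alpha> n s \<longleftrightarrow> (\<exists>xs m. pg w z xs \<and> Suc m < length xs \<and> xs!m = v \<and> xs!Suc m = d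
   \<and> lvl (last xs) = s \<and> dist (dirv (last xs)) (ev \<alpha>) < 1 / real (Suc n))"
  unfolding near_def Br_def by blast

lemma meas_near[measurable]: "Measurable.pred env_law (\<lambda>w. near w z v d \<alpha> n s)"
  unfolding near_alt by measurable

lemma meas_Aev[measurable]: "Measurable.pred env_law (\<lambda>w. Aev w z v \<alpha>)"
  unfolding Aev_def by measurable

lemma sets_Aev: "{w. Aev w z v \<alpha>} \<in> sets env_law"
  using meas_Aev[of z v \<alpha>] space_env by (simp add: pred_def)

theorem proposition8:
  shows "\<exists>D. D \<subseteq> {0..pi/2} \<and> {0..pi/2} - D \<in> null_sets lebesgue \<and>
    (\<forall>\<alpha>\<in>D. \<forall>z::site. AE w in env_law.
       \<forall>p q. alpha_geodesic w \<alpha> z p \<and> alpha_geodesic w \<alpha> z q \<longrightarrow> p = q)"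
proof -
  have fm: "finite_measure env_law" using env_prob unfolding prob_space_def by blast
  define F where "F z v \<alpha> = {w. Aev w z v \<alpha>}" for z v :: site and \<alpha> :: real
  define C where "C = {\<alpha>\<in>{0..pi/2}. \<exists>z v. measure env_law (F z v \<alpha>) > 0}"
  have Ceq: "C = (\<Union>zv. {\<alpha>\<in>{0..pi/2}. measure env_law (F (fst zv) (snd zv) \<alpha>) > 0})"
  proof (intro antisym subsetI)
    fix \<alpha> assume "\<alpha> \<in> C"
    then obtain z v where "\<alpha> \<in> {0..pi/2}" "measure env_law (F z v \<alpha>) > 0" unfolding C_def by blast
    then show "\<alpha> \<in> (\<Union>zv. {\<alpha>\<in>{0..pi/2}. measure env_law (F (fst zv) (snd zv) \<alpha>) > 0})"
      by (intro UN_I[of "(z, v)"]) auto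
  next
    fix \<alpha> assume "\<alpha> \<in> (\<Union>zv. {\<alpha>\<in>{0..pi/2}. measure env_law (F (fst zv) (snd zv) \<alpha>) > 0})"
    then show "\<alpha> \<in> C" unfolding C_def by blast
  qed
  have cC: "countable C"
    unfolding Ceq
  proof (intro countable_UN[OF countableI_type])
    fix zv :: "site \<times> site"
    show "countable {\<alpha>\<in>{0..pi/2}. measure env_law (F (fst zv) (snd zv) \<alpha>) > 0}"
    proof (rule countable_pos[OF fm])
      fix \<alpha> show "F (fst zv) (snd zv) \<alpha> \<in> sets env_law" unfolding F_def by (rule sets_Aev)
    next
      show "disjoint_family_on (F (fst zv) (snd zv)) {0..pi/2}"
        unfolding disjoint_family_on_def F_def using disj by blast
    qed
  qed
  define D where "D = {0..pi/2} - C"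
  have "{0..pi/2} - D = C" unfolding D_def C_def by auto
  moreover have "C \<in> null_sets lebesgue"
    by (rule null_sets_completionI[OF countable_imp_null_set_lborel[OF cC]])
  moreover have "\<forall>\<alpha>\<in>D. \<forall>z::site. AE w in env_law.
       \<forall>p q. alpha_geodesic w \<alpha> z p \<and> alpha_geodesic w \<alpha> z q \<longrightarrow> p = q"
  proof (intro ballI allI)
    fix \<alpha> z assume aD: "\<alpha> \<in> D"
    have null: "F z v \<alpha> \<in> null_sets env_law" for v
    proof -
      have "\<alpha> \<in> {0..pi/2}" "\<alpha> \<notin> C" using aD unfolding D_def by blast+
      then have "\<not> measure env_law (F z v \<alpha>) > 0" unfolding C_def by blast
      then have "measure env_law (F z v \<alpha>) = 0" using measure_nonneg[of env_law "F z v \<alpha>"] by linarith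
      moreover have "F z v \<alpha> \<in> sets env_law" unfolding F_def by (rule sets_Aev)
      ultimately show ?thesis
        using finite_measure.emeasure_eq_measure[OF fm] by (auto intro: null_setsI)
    qed
    show "AE w in env_law. \<forall>p q. alpha_geodesic w \<alpha> z p \<and> alpha_geodesic w \<alpha> z q \<longrightarrow> p = q"
    proof (rule AE_I')
      show "(\<Union>v. F z v \<alpha>) \<in> null_sets env_law" using null by (rule null_sets_UN)
      show "{w \<in> space env_law. \<not> (\<forall>p q. alpha_geodesic w \<alpha> z p \<and> alpha_geodesic w \<alpha> z q \<longrightarrow> p = q)}
            \<subseteq> (\<Union>v. F z v \<alpha>)"
        unfolding F_def using bad_Aev by blast
    qed
  qed
  ultimately show ?thesis unfolding D_def by (intro exI[of _ "{0..pi/2} - C"]) auto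
qed

end
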